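(* Let $0<\gamma\le\frac{1-\beta}{(1+\beta)^2\Phi_{\max}^2}$, let $z_0=\theta_0-\theta^\star$, and for $t\ge1$ let $C^{t:1}=(I-\gamma a_t)(I-\gamma a_{t-1})\cdots(I-\gamma a_1)$. Then for all $t\ge1$, $$\mathbb E\big[\|C^{t:1}z_0\|_2^2\big]\le(1-\gamma(1-\beta)\mu')^t\,\mathbb E\big[\|z_0\|_2^2\big]\le\exp(-\gamma(1-\beta)\mu't)\,\mathbb E\big[\|z_0\|_2^2\big].$$
   Context: Setting. Let $\mathcal S=\{1,\dots,n\}$ be a finite state space and $\mathcal A$ a finite action space; fix a stationary randomized policy $\pi$, transition probabilities $P(s'|s,a)$, a reward function $r$ with $|r(s,a)|\le R_{\max}$, and a discount factor $\beta\in(0,1)$. Let $P^\pi(s,s')=\sum_a\pi(s,a)P(s'|s,a)$, assumed irreducible with stationary distribution $\rho$, $D=\mathrm{diag}(\rho)$. Features $\phi:\mathcal S\to\mathbb R^d$ with $\|\phi(s)\|_2\le\Phi_{\max}$, $\Phi\in\mathbb R^{n\times d}$ with rows $\phi(s)^\top$ of full column rank, $R(s)=\sum_a\pi(s,a)r(s,a)$, $A=\Phi^\top D(I-\beta P^\pi)\Phi$, $b=\Phi^\top DR$, $\theta^\star=A^{-1}b$, $B=\sum_s\rho(s)\phi(s)\phi(s)^\top$ with minimum eigenvalue $\mu'>0$. Samples $(s_t,a_t,r_t,s'_t)_{t\ge1}$ i.i.d. with $s_t\sim\rho$, $a_t\sim\pi(s_t,\cdot)$, $r_t=r(s_t,a_t)$,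 $s'_t\sim P(\cdot|s_t,a_t)$, independent of the initial parameter $\theta_0$; $a_t=\phi(s_t)\phi(s_t)^\top-\beta\phi(s_t)\phi(s'_t)^\top$. *)

theory Defs
  imports "HOL-Probability.Probability"
begin

definition outer :: "real^'d \<Rightarrow> real^'d \<Rightarrow> real^'d^'d" where
  "outer u v = (\<chi> i j. u $ i * v $ j)"

definition Ppi :: "('s::finite \<Rightarrow> 'a::finite \<Rightarrow> real) \<Rightarrow> ('s \<Rightarrow> 'a \<Rightarrow> 's \<Rightarrow> real) \<Rightarrow> real^'s^'s" where
  "Ppi pol P = (\<chi> s s'. \<Sum>a\<in>UNIV. pol s a * P s a s')"

definition Rvec :: "('s::finite \<Rightarrow> 'a::finite \<Rightarrow> real) \<Rightarrow> ('s \<Rightarrow> 'a \<Rightarrow> real) \<Rightarrow> real^'s" where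
  "Rvec pol r = (\<chi> s. \<Sum>a\<in>UNIV. pol s a * r s a)"

definition Phimat :: "('s::finite \<Rightarrow> real^'d) \<Rightarrow> real^'d^'s" where
  "Phimat phi = (\<chi> s. phi s)"

definition Dmat :: "('s::finite \<Rightarrow> real) \<Rightarrow> real^'s^'s" where
  "Dmat rho = (\<chi> i j. if i = j then rho i else 0)"

definition Amat where
  "Amat pol P rho phi beta =
     transpose (Phimat phi) ** Dmat rho ** (mat 1 - beta *\<^sub>R Ppi pol P) ** Phimat phi"

definition bvec where
  "bvec pol r rho phi = (transpose (Phimat phi) ** Dmat rho) *v Rvec pol r"

definition theta_star where
  "theta_star pol P r rho phi beta = matrix_inv (Amat pol P rho phi beta) *v bvec pol r rho phi"

definition Bmat :: "('s::finite \<Rightarrow> real) \<Rightarrow> ('s \<Rightarrow> real^'d::finite) \<Rightarrow> real^'d^'d" where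
  "Bmat rho phi = (\<Sum>s\<in>UNIV. rho s *\<^sub>R outer (phi s) (phi s))"

definition min_eigenvalue :: "real^'d::finite^'d \<Rightarrow> real" where
  "min_eigenvalue M = Min {l. \<exists>v. v \<noteq> 0 \<and> M *v v = l *\<^sub>R v}"

definition a_mat :: "('s \<Rightarrow> real^'d::finite) \<Rightarrow> real \<Rightarrow> 's \<times> 'a \<times> 's \<Rightarrow> real^'d^'d" where
  "a_mat phi beta x = (case x of (s, a, s') \<Rightarrow> outer (phi s) (phi s) - beta *\<^sub>R outer (phi s) (phi s'))"

primrec Cprod :: "('s \<Rightarrow> real^'d::finite) \<Rightarrow> real \<Rightarrow> real \<Rightarrow> (nat \<Rightarrow> 's \<times> 'a \<times> 's) \<Rightarrow> nat \<Rightarrow> real^'d^'d" where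
  "Cprod phi beta gamma w 0 = mat 1"
| "Cprod phi beta gamma w (Suc t) = (mat 1 - gamma *\<^sub>R a_mat phi beta (w (Suc t))) ** Cprod phi beta gamma w t"

end

theory Submission
  imports Defs
begin

lemma outer_mult: "outer u v *v y = (v \<bullet> y) *\<^sub>R u"
  by (simp add: vec_eq_iff outer_def matrix_vector_mult_def inner_vec_def sum_distrib_left mult.commute mult.left_commute)

lemma amat_mult: "a_mat phi beta (s, a, s') *v y = ((phi s - beta *\<^sub>R phi s') \<bullet> y) *\<^sub>R phi s"
  by (simp add: a_mat_def matrix_vector_mult_diff_rdistrib outer_mult scaleR_matrix_vector_assoc[symmetric] inner_diff_left algebra_simps)

lemma step_mult: "(mat 1 - g *\<^sub>R a_mat phi beta (s,a,s')) *v y = y - (g * ((phi s - beta *\<^sub>R phi s') \<bullet> y)) *\<^sub>R phi s"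
  by (simp add: matrix_vector_mult_diff_rdistrib scaleR_matrix_vector_assoc[symmetric] amat_mult)

lemma pointwise:
  fixes y :: "real^'d::finite"
  assumes "norm (phi s) \<le> Phimax" "g > 0" "0 < beta" "beta < 1"
  shows "(norm ((mat 1 - g *\<^sub>R a_mat phi beta (s,a,s')) *v y))^2 \<le>
    (norm y)^2 + (-2*g + g*beta + g^2*Phimax^2*(1+beta)) * (phi s \<bullet> y)^2
      + (g*beta + g^2*Phimax^2*(1+beta)*beta) * (phi s' \<bullet> y)^2"
proof -
  define X where "X = phi s \<bullet> y"
  define X' where "X' = phi s' \<bullet> y"
  define c where "c = X - beta * X'"
  define p where "p = (norm (phi s))^2"
  have c: "(phi s - beta *\<^sub>R phi s') \<bullet> y = c" by (simp add: c_def X_def X'_def inner_diff_left)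
  have "(norm ((mat 1 - g *\<^sub>R a_mat phi beta (s,a,s')) *v y))^2 = (norm (y - (g*c) *\<^sub>R phi s))^2"
    by (simp add: step_mult c)
  also have "\<dots> = (norm y)^2 - 2*g*c*X + g^2*c^2*p"
    unfolding power2_norm_eq_inner p_def X_def by (simp add: inner_diff_left inner_diff_right inner_commute algebra_simps power2_eq_square)
  finally have eq: "(norm ((mat 1 - g *\<^sub>R a_mat phi beta (s,a,s')) *v y))^2 = (norm y)^2 - 2*g*c*X + g^2*c^2*p" .
  have p: "0 \<le> p" "p \<le> Phimax^2" using assms(1) by (auto simp: p_def power_mono)
  have 1: "-2*g*c*X \<le> -2*g*X^2 + g*beta*(X^2+X'^2)"
  proof -
    have "2*X*X' \<le> X^2+X'^2" by (smt (verit) sum_squares_bound)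
    hence "g*beta*(2*X*X') \<le> g*beta*(X^2+X'^2)" using assms by (intro mult_left_mono) auto
    thus ?thesis by (simp add: c_def algebra_simps power2_eq_square)
  qed
  have 2: "c^2 \<le> (1+beta)*(X^2 + beta*X'^2)"
  proof -
    have "0 \<le> beta*(X+X')^2" using assms by simp
    thus ?thesis by (simp add: c_def algebra_simps power2_eq_square)
  qed
  have "g^2*c^2*p \<le> g^2*c^2*Phimax^2" using p by (intro mult_left_mono) auto
  also have "\<dots> = (g^2*Phimax^2)*c^2" by simp
  also have "\<dots> \<le> g^2*Phimax^2*((1+beta)*(X^2 + beta*X'^2))"
    by (rule mult_left_mono[OF 2]) simp
  finally have 3: "g^2*c^2*p \<le> g^2*Phimax^2*((1+beta)*(X^2 + beta*X'^2))" .
  show ?thesis unfolding eq X_def[symmetric] X'_def[symmetric]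
    using 1 3 by (simp add: algebra_simps)
qed

definition qf :: "('s::finite \<Rightarrow> real) \<Rightarrow> ('s \<Rightarrow> real^'d::finite) \<Rightarrow> real^'d \<Rightarrow> real" where
  "qf rho phi y = (\<Sum>s\<in>UNIV. rho s * (phi s \<bullet> y)^2)"

lemma mv_sum: "finite S \<Longrightarrow> (\<Sum>s\<in>S. A s) *v y = (\<Sum>s\<in>S. A s *v y)"
  by (induct rule: finite_induct) (simp_all add: matrix_vector_mult_add_rdistrib)

lemma Bmat_mult: "Bmat rho phi *v y = (\<Sum>s\<in>UNIV. (rho s * (phi s \<bullet> y)) *\<^sub>R phi s)"
  by (simp add: Bmat_def mv_sum scaleR_matrix_vector_assoc[symmetric] outer_mult)

lemma Bmat_inner: "w \<bullet> (Bmat rho phi *v v) = (\<Sum>s\<in>UNIV. rho s * (phi s \<bullet> v) * (phi s \<bullet> w))"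
  by (simp add: Bmat_mult inner_sum_right inner_commute)

lemma qf_Bmat: "qf rho phi v = v \<bullet> (Bmat rho phi *v v)"
  by (simp add: Bmat_inner qf_def power2_eq_square mult.assoc)

lemma Bmat_sym: "(Bmat rho phi *v x) \<bullet> y = x \<bullet> (Bmat rho phi *v y)"
  by (simp add: inner_commute[of _ y] Bmat_inner mult_ac)

lemma qf_scale: "qf rho phi (k *\<^sub>R y) = k^2 * qf rho phi y"
  by (simp add: qf_def sum_distrib_left power_mult_distrib mult_ac)

lemma qf_expand: "qf rho phi (v + e *\<^sub>R w) = qf rho phi v + 2 * e * (w \<bullet> (Bmat rho phi *v v)) + e^2 * qf rho phi w"
  by (simp add: qf_def Bmat_inner inner_add_right power2_sum sum.distrib sum_distrib_left algebra_simps power2_eq_square)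

lemma eig_finite:
  fixes phi :: "'s::finite \<Rightarrow> real^'d::finite"
  shows "finite {l. \<exists>v. v \<noteq> 0 \<and> Bmat rho phi *v v = l *\<^sub>R v}" (is "finite ?E")
proof -
  define B where "B = Bmat rho phi"
  define ev where "ev l = (SOME v. v \<noteq> 0 \<and> B *v v = l *\<^sub>R v)" for l
  have ev: "ev l \<noteq> 0 \<and> B *v ev l = l *\<^sub>R ev l" if "l \<in> ?E" for l
    unfolding ev_def using that someI_ex[of "\<lambda>v. v \<noteq> 0 \<and> B *v v = l *\<^sub>R v"] by (auto simp: B_def)
  have inj: "inj_on ev ?E"
  proof (rule inj_onI)
    fix l1 l2 assume l: "l1 \<in> ?E" "l2 \<in> ?E" "ev l1 = ev l2"
    have "l1 *\<^sub>R ev l1 = l2 *\<^sub>R ev l1" using ev[OF l(1)] ev[OF l(2)] l(3) by metis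
    thus "l1 = l2" using ev[OF l(1)] by simp
  qed
  have orth: "orthogonal (ev l1) (ev l2)" if l: "l1 \<in> ?E" "l2 \<in> ?E" "ev l1 \<noteq> ev l2" for l1 l2
  proof -
    from l have ne: "l1 \<noteq> l2" by auto
    have "l1 * (ev l1 \<bullet> ev l2) = (B *v ev l1) \<bullet> ev l2" using ev[OF l(1)] by simp
    also have "\<dots> = ev l1 \<bullet> (B *v ev l2)" unfolding B_def by (rule Bmat_sym)
    also have "\<dots> = l2 * (ev l1 \<bullet> ev l2)" using ev[OF l(2)] by simp
    finally have "(l1 - l2) * (ev l1 \<bullet> ev l2) = 0" by (simp add: algebra_simps)
    thus "orthogonal (ev l1) (ev l2)" using ne by (simp add: orthogonal_def)
  qed
  have "pairwise orthogonal (ev ` ?E)" using orth by (auto simp: pairwise_def)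
  moreover have "0 \<notin> ev ` ?E" using ev by force
  ultimately have "independent (ev ` ?E)" by (rule pairwise_orthogonal_independent)
  hence "finite (ev ` ?E)" by (rule independent_imp_finite)
  thus ?thesis using inj by (rule finite_imageD)
qed

lemma rayleigh:
  fixes phi :: "'s::finite \<Rightarrow> real^'d::finite"
  shows "\<exists>m v. v \<noteq> 0 \<and> Bmat rho phi *v v = m *\<^sub>R v \<and> norm v = 1 \<and> qf rho phi v = m
       \<and> (\<forall>y. m * (norm y)^2 \<le> qf rho phi y)"
proof -
  define B where "B = Bmat rho phi"
  have cont: "continuous_on (sphere 0 1) (qf rho phi)"
    unfolding qf_def by (intro continuous_intros)
  obtain v where v: "v \<in> sphere (0::real^'d) 1" and vmin: "\<And>y. y \<in> sphere 0 1 \<Longrightarrow> qf rho phi v \<le> qf rho phi y"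
    using continuous_attains_inf[OF compact_sphere _ cont] by auto
  define m where "m = qf rho phi v"
  have nv: "norm v = 1" using v by simp
  have lb: "m * (norm y)^2 \<le> qf rho phi y" for y
  proof (cases "y = 0")
    case True thus ?thesis by (simp add: qf_def)
  next
    case False
    define u where "u = (1 / norm y) *\<^sub>R y"
    have "u \<in> sphere 0 1" using False by (simp add: u_def)
    hence "m \<le> qf rho phi u" using vmin m_def by simp
    also have "\<dots> = qf rho phi y / (norm y)^2" unfolding u_def qf_scale by (simp add: field_simps)
    finally show ?thesis using False by (simp add: field_simps)
  qed
  define h where "h x = qf rho phi x - m * (norm x)^2" for x
  have h0: "h x \<ge> 0" for x using lb[of x] by (simp add: h_def)
  have hv: "h v = 0" using nv by (simp add: h_def m_def)
  define d where "d = B *v v - m *\<^sub>R v"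
  have hexp: "h (v + e *\<^sub>R d) = h v + 2 * e * (d \<bullet> d) + e^2 * h d" for e
  proof -
    have "(norm (v + e *\<^sub>R d))^2 = (norm v)^2 + 2 * e * (d \<bullet> v) + e^2 * (norm d)^2"
      unfolding power2_norm_eq_inner by (simp add: inner_add_left inner_add_right inner_commute algebra_simps power2_eq_square)
    moreover have "d \<bullet> (Bmat rho phi *v v) = d \<bullet> d + m * (d \<bullet> v)" by (simp add: d_def B_def inner_diff_right)
    ultimately show ?thesis unfolding h_def qf_expand by (simp add: algebra_simps)
  qed
  have "d = 0"
  proof (rule ccontr)
    assume "d \<noteq> 0"
    define D where "D = d \<bullet> d"
    define H where "H = h d"
    have D: "D > 0" using \<open>d \<noteq> 0\<close> by (simp add: D_def)
    have H: "H \<ge> 0" using h0 by (simp add: H_def)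
    define e where "e = - D / (H + 1)"
    have "0 \<le> h (v + e *\<^sub>R d)" by (rule h0)
    also have "\<dots> = 2 * e * D + e^2 * H" using hexp hv by (simp add: D_def H_def)
    also have "\<dots> = D^2 * (H - 2*(H+1)) / (H+1)^2"
    proof -
      have "H + 1 \<noteq> 0" using H by simp
      thus ?thesis unfolding e_def by (simp add: divide_simps power2_eq_square) algebra
    qed
    also have "\<dots> < 0" using D H by (intro divide_neg_pos mult_pos_neg) auto
    finally show False by simp
  qed
  hence "B *v v = m *\<^sub>R v" by (simp add: d_def)
  moreover have "v \<noteq> 0" using nv by auto
  ultimately show ?thesis using nv lb m_def B_def by blast
qed

lemma mu_bounds:
  fixes phi :: "'s::finite \<Rightarrow> real^'d::finite"
  assumes "\<And>s. rho s \<ge> 0" "(\<Sum>s\<in>UNIV. rho s) = 1" "\<And>s. norm (phi s) \<le> Phimax"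
  shows "\<forall>y. min_eigenvalue (Bmat rho phi) * (norm y)^2 \<le> qf rho phi y"
    and "min_eigenvalue (Bmat rho phi) \<le> Phimax^2"
proof -
  obtain m v where mv: "v \<noteq> 0" "Bmat rho phi *v v = m *\<^sub>R v" "norm v = 1" "qf rho phi v = m"
     "\<forall>y. m * (norm y)^2 \<le> qf rho phi y" using rayleigh by blast
  have le: "min_eigenvalue (Bmat rho phi) \<le> m"
    unfolding min_eigenvalue_def using mv(1,2) by (intro Min_le eig_finite) auto
  show "\<forall>y. min_eigenvalue (Bmat rho phi) * (norm y)^2 \<le> qf rho phi y"
  proof
    fix y show "min_eigenvalue (Bmat rho phi) * (norm y)^2 \<le> qf rho phi y"
      using mv(5) le by (meson mult_right_mono order_trans zero_le_power2)
  qed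
  have "m = (\<Sum>s\<in>UNIV. rho s * (phi s \<bullet> v)^2)" using mv(4) by (simp add: qf_def)
  also have "\<dots> \<le> (\<Sum>s\<in>UNIV. rho s * Phimax^2)"
  proof (intro sum_mono mult_left_mono assms(1))
    fix s
    have "\<bar>phi s \<bullet> v\<bar> \<le> norm (phi s) * norm v" by (rule Cauchy_Schwarz_ineq2)
    hence "\<bar>phi s \<bullet> v\<bar> \<le> Phimax" using mv(3) assms(3)[of s] by simp
    hence "\<bar>phi s \<bullet> v\<bar>^2 \<le> Phimax^2" by (intro power_mono) auto
    thus "(phi s \<bullet> v)^2 \<le> Phimax^2" by simp
  qed
  also have "\<dots> = Phimax^2" using assms(2) by (simp add: sum_distrib_right[symmetric])
  finally show "min_eigenvalue (Bmat rho phi) \<le> Phimax^2" using le by simp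
qed

lemma sum3: "(\<Sum>x\<in>UNIV. F x) = (\<Sum>s\<in>UNIV. \<Sum>a\<in>UNIV. \<Sum>s'\<in>UNIV. (F (s,a,s') :: real))"
  by (simp add: UNIV_Times_UNIV[symmetric] sum.cartesian_product del: UNIV_Times_UNIV)

locale tdloc =
  fixes pol :: "'s::finite \<Rightarrow> 'a::finite \<Rightarrow> real"
    and P :: "'s \<Rightarrow> 'a \<Rightarrow> 's \<Rightarrow> real"
    and rho :: "'s \<Rightarrow> real"
    and q :: "('s \<times> 'a \<times> 's) pmf"
  assumes pol_sum: "\<And>s. (\<Sum>a\<in>UNIV. pol s a) = 1"
    and P_sum: "\<And>s a. (\<Sum>s'\<in>UNIV. P s a s') = 1"
    and rho_nonneg: "\<And>s. rho s \<ge> 0"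
    and rho_sum: "(\<Sum>s\<in>UNIV. rho s) = 1"
    and rho_stationary: "\<And>s'. rho s' = (\<Sum>s\<in>UNIV. rho s * Ppi pol P $ s $ s')"
    and q_law: "\<And>s a s'. pmf q (s, a, s') = rho s * pol s a * P s a s'"
begin

lemma E1: "(\<Sum>x\<in>UNIV. pmf q x * f (fst x)) = (\<Sum>s\<in>UNIV. rho s * f s)"
proof -
  have "(\<Sum>x\<in>UNIV. pmf q x * f (fst x)) = (\<Sum>s\<in>UNIV. \<Sum>a\<in>UNIV. \<Sum>s'\<in>UNIV. (rho s * pol s a * f s) * P s a s')"
    by (subst sum3) (simp add: q_law mult_ac)
  also have "\<dots> = (\<Sum>s\<in>UNIV. \<Sum>a\<in>UNIV. (rho s * f s) * pol s a)"
  proof (intro sum.cong refl)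
    fix s a
    have "(\<Sum>s'\<in>UNIV. (rho s * pol s a * f s) * P s a s') = (rho s * pol s a * f s) * (\<Sum>s'\<in>UNIV. P s a s')"
      by (simp only: sum_distrib_left)
    thus "(\<Sum>s'\<in>UNIV. (rho s * pol s a * f s) * P s a s') = (rho s * f s) * pol s a" by (simp add: P_sum)
  qed
  also have "\<dots> = (\<Sum>s\<in>UNIV. rho s * f s)"
  proof (intro sum.cong refl)
    fix s
    have "(\<Sum>a\<in>UNIV. (rho s * f s) * pol s a) = (rho s * f s) * (\<Sum>a\<in>UNIV. pol s a)"
      by (simp only: sum_distrib_left)
    thus "(\<Sum>a\<in>UNIV. (rho s * f s) * pol s a) = rho s * f s" by (simp add: pol_sum)
  qed
  finally show ?thesis .
qed

lemma E2: "(\<Sum>x\<in>UNIV. pmf q x * f (snd (snd x))) = (\<Sum>s\<in>UNIV. rho s * f s)"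
proof -
  have "(\<Sum>x\<in>UNIV. pmf q x * f (snd (snd x))) = (\<Sum>s\<in>UNIV. \<Sum>a\<in>UNIV. \<Sum>s'\<in>UNIV. f s' * (rho s * (pol s a * P s a s')))"
    by (subst sum3) (simp add: q_law mult_ac)
  also have "\<dots> = (\<Sum>s\<in>UNIV. \<Sum>s'\<in>UNIV. \<Sum>a\<in>UNIV. f s' * (rho s * (pol s a * P s a s')))"
    by (rule sum.cong[OF refl], rule sum.swap)
  also have "\<dots> = (\<Sum>s'\<in>UNIV. \<Sum>s\<in>UNIV. \<Sum>a\<in>UNIV. f s' * (rho s * (pol s a * P s a s')))"
    by (rule sum.swap)
  also have "\<dots> = (\<Sum>s'\<in>UNIV. f s' * (\<Sum>s\<in>UNIV. rho s * (\<Sum>a\<in>UNIV. pol s a * P s a s')))"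
    by (simp only: sum_distrib_left)
  also have "\<dots> = (\<Sum>s'\<in>UNIV. f s' * rho s')"
  proof -
    have st: "(\<Sum>s\<in>UNIV. rho s * (\<Sum>a\<in>UNIV. pol s a * P s a s')) = rho s'" for s'
      using rho_stationary[of s'] by (simp add: Ppi_def)
    show ?thesis by (simp only: st)
  qed
  finally show ?thesis by (simp add: mult_ac)
qed

lemma pmf_sum1: "(\<Sum>x\<in>UNIV. pmf q x) = 1"
  using E1[of "\<lambda>_. 1"] rho_sum by simp

lemma onestep:
  fixes phi :: "'s \<Rightarrow> real^'d::finite"
  assumes phi_bound: "\<And>s. norm (phi s) \<le> Phimax"
    and beta: "0 < beta" "beta < 1"
    and g: "g > 0" "g * ((1+beta)^2 * Phimax^2) \<le> 1 - beta"
    and mu: "\<And>y. mu * (norm y)^2 \<le> qf rho phi y"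
  shows "(\<integral>\<^sup>+x. ennreal ((norm ((mat 1 - g *\<^sub>R a_mat phi beta x) *v y))^2) \<partial>measure_pmf q)
          \<le> ennreal ((1 - g*(1-beta)*mu) * (norm y)^2)"
proof -
  define N where "N x = (norm ((mat 1 - g *\<^sub>R a_mat phi beta x) *v y))^2" for x :: "'s \<times> 'a \<times> 's"
  define gq where "gq s = (phi s \<bullet> y)^2" for s
  define c1 where "c1 = -2*g + g*beta + g^2*Phimax^2*(1+beta)"
  define c2 where "c2 = g*beta + g^2*Phimax^2*(1+beta)*beta"
  define Q where "Q = qf rho phi y"
  have Qdef: "Q = (\<Sum>s\<in>UNIV. rho s * gq s)" by (simp add: Q_def qf_def gq_def)
  have NL: "N x \<le> (norm y)^2 + c1 * gq (fst x) + c2 * gq (snd (snd x))" for x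
    using pointwise[where phi=phi and s="fst x" and a="fst (snd x)" and s'="snd (snd x)" and y=y and g=g and beta=beta and Phimax=Phimax, OF phi_bound[of "fst x"] g(1) beta(1) beta(2)]
    unfolding N_def c1_def c2_def gq_def by (cases x) auto
  have "(\<integral>\<^sup>+x. ennreal (N x) \<partial>measure_pmf q) = (\<Sum>x\<in>UNIV. ennreal (pmf q x) * ennreal (N x))"
    by (simp add: nn_integral_measure_pmf nn_integral_count_space_finite)
  also have "\<dots> = ennreal (\<Sum>x\<in>UNIV. pmf q x * N x)"
    by (simp add: sum_ennreal[symmetric] ennreal_mult N_def)
  also have "\<dots> \<le> ennreal ((1 - g*(1-beta)*mu) * (norm y)^2)"
  proof (rule ennreal_leI)
    have "(\<Sum>x\<in>UNIV. pmf q x * N x) \<le> (\<Sum>x\<in>UNIV. pmf q x * ((norm y)^2 + c1 * gq (fst x) + c2 * gq (snd (snd x))))"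
      by (intro sum_mono mult_left_mono NL) simp
    also have "\<dots> = (norm y)^2 * (\<Sum>x\<in>UNIV. pmf q x) + c1 * (\<Sum>x\<in>UNIV. pmf q x * gq (fst x)) + c2 * (\<Sum>x\<in>UNIV. pmf q x * gq (snd (snd x)))"
      by (simp add: sum.distrib sum_distrib_left sum_distrib_right algebra_simps)
    also have "\<dots> = (norm y)^2 + (c1 + c2) * Q"
      by (simp add: pmf_sum1 E1 E2 Qdef algebra_simps)
    also have "\<dots> \<le> (norm y)^2 - g*(1-beta) * Q"
    proof -
      have "c1 + c2 = -2*g*(1-beta) + g * (g*((1+beta)^2*Phimax^2))" by (simp add: c1_def c2_def power2_eq_square algebra_simps)
      also have "\<dots> \<le> -2*g*(1-beta) + g * (1-beta)" using g by (intro add_left_mono mult_left_mono) auto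
      finally have "c1 + c2 \<le> - g*(1-beta)" by simp
      moreover have "Q \<ge> 0" unfolding Q_def qf_def using rho_nonneg by (intro sum_nonneg) auto
      ultimately have "(c1 + c2) * Q \<le> (- g*(1-beta)) * Q" by (rule mult_right_mono)
      thus ?thesis by simp
    qed
    also have "\<dots> \<le> (1 - g*(1-beta)*mu) * (norm y)^2"
    proof -
      have "g*(1-beta)*(mu * (norm y)^2) \<le> g*(1-beta)*Q" using mu[of y] g beta by (intro mult_left_mono) (auto simp: Q_def)
      thus ?thesis by (simp add: algebra_simps)
    qed
    finally show "(\<Sum>x\<in>UNIV. pmf q x * N x) \<le> (1 - g*(1-beta)*mu) * (norm y)^2" .
  qed
  finally show ?thesis by (simp add: N_def)
qed
end

lemma Cprod_cong: "(\<And>i. i \<in> {1..n} \<Longrightarrow> w i = w' i) \<Longrightarrow> Cprod phi beta g w n = Cprod phi beta g w' n"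
  by (induct n) auto

lemma Cprod_meas:
  fixes phi :: "'s \<Rightarrow> real^'d::finite"
  shows "{1..n} \<subseteq> I \<Longrightarrow> (\<lambda>w. Cprod phi beta g w n) \<in> borel_measurable (PiM I (\<lambda>_. measure_pmf (q :: ('s \<times> 'a \<times> 's) pmf)))"
proof (induct n)
  case 0 thus ?case by simp
next
  case (Suc n)
  have I: "Suc n \<in> I" "{1..n} \<subseteq> I" using Suc.prems by auto
  have f: "(\<lambda>w. mat 1 - g *\<^sub>R a_mat phi beta (w (Suc n))) \<in> borel_measurable (PiM I (\<lambda>_. measure_pmf q))"
    by (rule measurable_compose[OF measurable_component_singleton[OF I(1)]]) simp
  have c: "continuous_on UNIV (\<lambda>x :: (real^'d^'d) \<times> (real^'d^'d). fst x ** snd x)"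
    unfolding matrix_matrix_mult_def by (intro continuous_intros)
  show ?case
    using borel_measurable_continuous_Pair[OF f Suc.hyps[OF I(2)] c] by simp
qed

lemma Cvec_meas:
  fixes phi :: "'s \<Rightarrow> real^'d::finite"
  shows "{1..n} \<subseteq> I \<Longrightarrow> (\<lambda>w. ennreal ((norm (Cprod phi beta g w n *v z))^2)) \<in> borel_measurable (PiM I (\<lambda>_. measure_pmf (q :: ('s \<times> 'a \<times> 's) pmf)))"
proof -
  assume "{1..n} \<subseteq> I"
  have c: "continuous_on UNIV (\<lambda>A :: real^'d^'d. (norm (A *v z))^2)"
    unfolding matrix_vector_mult_def by (intro continuous_intros)
  have "(\<lambda>w. (norm (Cprod phi beta g w n *v z))^2) \<in> borel_measurable (PiM I (\<lambda>_. measure_pmf q))"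
    by (rule borel_measurable_continuous_on[OF c Cprod_meas[OF \<open>{1..n} \<subseteq> I\<close>]])
  thus ?thesis by measurable
qed

lemma iter:
  fixes phi :: "'s \<Rightarrow> real^'d::finite" and q :: "('s \<times> 'a \<times> 's) pmf"
  assumes os: "\<And>y. (\<integral>\<^sup>+x. ennreal ((norm ((mat 1 - g *\<^sub>R a_mat phi beta x) *v y))^2) \<partial>measure_pmf q)
          \<le> ennreal (c * (norm y)^2)"
    and c: "c \<ge> 0"
  shows "(\<integral>\<^sup>+w. ennreal ((norm (Cprod phi beta g w n *v z))^2) \<partial>PiM {..n} (\<lambda>_. measure_pmf q)) \<le> ennreal (c^n * (norm z)^2)"
proof (induct n)
  case 0
  have "prob_space (PiM {0::nat} (\<lambda>_. measure_pmf q))"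
    by (rule prob_space_PiM) (simp add: measure_pmf.prob_space_axioms)
  thus ?case by (simp add: prob_space.emeasure_space_1)
next
  case (Suc n)
  interpret PS: product_sigma_finite "\<lambda>_::nat. measure_pmf q"
    by (simp add: product_sigma_finite_def prob_space_imp_sigma_finite measure_pmf.prob_space_axioms)
  have ins: "{..Suc n} = insert (Suc n) {..n}" by auto
  have "(\<integral>\<^sup>+w. ennreal ((norm (Cprod phi beta g w (Suc n) *v z))^2) \<partial>PiM {..Suc n} (\<lambda>_. measure_pmf q))
     = (\<integral>\<^sup>+x. (\<integral>\<^sup>+y. ennreal ((norm (Cprod phi beta g (x(Suc n := y)) (Suc n) *v z))^2) \<partial>measure_pmf q) \<partial>PiM {..n} (\<lambda>_. measure_pmf q))"
  proof -
    have m: "(\<lambda>w. ennreal ((norm (Cprod phi beta g w (Suc n) *v z))^2)) \<in> borel_measurable (PiM (insert (Suc n) {..n}) (\<lambda>_. measure_pmf q))"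
      by (rule Cvec_meas) auto
    show ?thesis unfolding ins by (rule PS.product_nn_integral_insert[OF _ _ m]) auto
  qed
  also have "\<dots> = (\<integral>\<^sup>+x. (\<integral>\<^sup>+y. ennreal ((norm ((mat 1 - g *\<^sub>R a_mat phi beta y) *v (Cprod phi beta g x n *v z)))^2) \<partial>measure_pmf q) \<partial>PiM {..n} (\<lambda>_. measure_pmf q))"
  proof -
    have eq: "Cprod phi beta g (x(Suc n := y)) n = Cprod phi beta g x n" for x y
      by (rule Cprod_cong) auto
    show ?thesis by (simp only: eq matrix_vector_mul_assoc[symmetric] Cprod.simps fun_upd_same)
  qed
  also have "\<dots> \<le> (\<integral>\<^sup>+x. ennreal c * ennreal ((norm (Cprod phi beta g x n *v z))^2) \<partial>PiM {..n} (\<lambda>_. measure_pmf q))"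
  proof (intro nn_integral_mono)
    fix x
    have "ennreal (c * (norm (Cprod phi beta g x n *v z))^2) = ennreal c * ennreal ((norm (Cprod phi beta g x n *v z))^2)"
      using c by (simp add: ennreal_mult)
    thus "(\<integral>\<^sup>+y. ennreal ((norm ((mat 1 - g *\<^sub>R a_mat phi beta y) *v (Cprod phi beta g x n *v z)))^2) \<partial>measure_pmf q)
       \<le> ennreal c * ennreal ((norm (Cprod phi beta g x n *v z))^2)"
      using os[of "Cprod phi beta g x n *v z"] by simp
  qed
  also have "\<dots> = ennreal c * (\<integral>\<^sup>+x. ennreal ((norm (Cprod phi beta g x n *v z))^2) \<partial>PiM {..n} (\<lambda>_. measure_pmf q))"
  proof -
    have m: "(\<lambda>x. ennreal ((norm (Cprod phi beta g x n *v z))^2)) \<in> borel_measurable (PiM {..n} (\<lambda>_. measure_pmf q))"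
      by (rule Cvec_meas) auto
    show ?thesis by (rule nn_integral_cmult[OF m])
  qed
  also have "\<dots> \<le> ennreal c * ennreal (c^n * (norm z)^2)"
    by (intro mult_left_mono Suc.hyps) auto
  also have "\<dots> = ennreal (c^Suc n * (norm z)^2)"
    using c by (simp add: ennreal_mult[symmetric] mult_ac)
  finally show ?case .
qed

lemma to_univ:
  fixes phi :: "'s \<Rightarrow> real^'d::finite" and q :: "('s \<times> 'a \<times> 's) pmf"
  shows "(\<integral>\<^sup>+w. ennreal ((norm (Cprod phi beta g w n *v z))^2) \<partial>PiM UNIV (\<lambda>_. measure_pmf q))
       = (\<integral>\<^sup>+w. ennreal ((norm (Cprod phi beta g w n *v z))^2) \<partial>PiM {..n} (\<lambda>_. measure_pmf q))"
proof -
  interpret PP: product_prob_space "\<lambda>_::nat. measure_pmf q" UNIV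
    by (simp add: product_prob_space_def product_prob_space_axioms_def product_sigma_finite_def
         prob_space_imp_sigma_finite measure_pmf.prob_space_axioms)
  have "(\<integral>\<^sup>+w. ennreal ((norm (Cprod phi beta g w n *v z))^2) \<partial>PiM {..n} (\<lambda>_. measure_pmf q))
      = (\<integral>\<^sup>+w. ennreal ((norm (Cprod phi beta g w n *v z))^2) \<partial>distr (PiM UNIV (\<lambda>_. measure_pmf q)) (PiM {..n} (\<lambda>_. measure_pmf q)) (\<lambda>x. restrict x {..n}))"
    by (simp add: PP.distr_PiM_restrict_finite)
  also have "\<dots> = (\<integral>\<^sup>+w. ennreal ((norm (Cprod phi beta g (restrict w {..n}) n *v z))^2) \<partial>PiM UNIV (\<lambda>_. measure_pmf q))"
  proof -
    have m: "(\<lambda>w. ennreal ((norm (Cprod phi beta g w n *v z))^2)) \<in> borel_measurable (PiM {..n} (\<lambda>_. measure_pmf q))"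
      by (rule Cvec_meas) auto
    hence m': "(\<lambda>w. ennreal ((norm (Cprod phi beta g w n *v z))^2)) \<in> borel_measurable (distr (PiM UNIV (\<lambda>_. measure_pmf q)) (PiM {..n} (\<lambda>_. measure_pmf q)) (\<lambda>x. restrict x {..n}))"
      by simp
    show ?thesis by (rule nn_integral_distr[OF measurable_restrict_subset m']) simp
  qed
  also have "\<dots> = (\<integral>\<^sup>+w. ennreal ((norm (Cprod phi beta g w n *v z))^2) \<partial>PiM UNIV (\<lambda>_. measure_pmf q))"
  proof -
    have eq: "Cprod phi beta g (restrict w {..n}) n = Cprod phi beta g w n" for w
      by (rule Cprod_cong) auto
    show ?thesis by (simp only: eq)
  qed
  finally show ?thesis by simp
qed

theorem mainTheorem11:
  fixes pol :: "'s::finite \<Rightarrow> 'a::finite \<Rightarrow> real"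
    and P :: "'s \<Rightarrow> 'a \<Rightarrow> 's \<Rightarrow> real"
    and r :: "'s \<Rightarrow> 'a \<Rightarrow> real"
    and Rmax beta gamma Phimax mu' :: real
    and rho :: "'s \<Rightarrow> real"
    and phi :: "'s \<Rightarrow> real^'d::finite"
    and q :: "('s \<times> 'a \<times> 's) pmf"
    and Theta :: "(real^'d) measure"
    and t :: nat
  assumes pol_nonneg: "\<And>s a. pol s a \<ge> 0"
    and pol_sum: "\<And>s. (\<Sum>a\<in>UNIV. pol s a) = 1"
    and P_nonneg: "\<And>s a s'. P s a s' \<ge> 0"
    and P_sum: "\<And>s a. (\<Sum>s'\<in>UNIV. P s a s') = 1"
    and r_bound: "\<And>s a. \<bar>r s a\<bar> \<le> Rmax"
    and beta: "0 < beta" "beta < 1"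
    and irreducible: "\<And>s s'. (s, s') \<in> {(x, y). Ppi pol P $ x $ y > 0}\<^sup>+"
    and rho_nonneg: "\<And>s. rho s \<ge> 0"
    and rho_sum: "(\<Sum>s\<in>UNIV. rho s) = 1"
    and rho_stationary: "\<And>s'. rho s' = (\<Sum>s\<in>UNIV. rho s * Ppi pol P $ s $ s')"
    and phi_bound: "\<And>s. norm (phi s) \<le> Phimax"
    and full_rank: "rank (Phimat phi) = CARD('d)"
    and mu'_def: "mu' = min_eigenvalue (Bmat rho phi)"
    and mu'_pos: "mu' > 0"
    and q_law: "\<And>s a s'. pmf q (s, a, s') = rho s * pol s a * P s a s'"
    and Theta_prob: "prob_space Theta"
    and Theta_sets: "sets Theta = sets borel"
    and gamma: "0 < gamma" "gamma \<le> (1 - beta) / ((1 + beta)^2 * Phimax^2)"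
    and t: "t \<ge> 1"
  shows "(\<integral>\<^sup>+ (th, w). ennreal ((norm (Cprod phi beta gamma w t *v (th - theta_star pol P r rho phi beta)))^2)
            \<partial>(Theta \<Otimes>\<^sub>M (\<Pi>\<^sub>M i\<in>UNIV. measure_pmf q)))
         \<le> ennreal ((1 - gamma * (1 - beta) * mu') ^ t)
            * (\<integral>\<^sup>+ th. ennreal ((norm (th - theta_star pol P r rho phi beta))^2) \<partial>Theta)
       \<and> ennreal ((1 - gamma * (1 - beta) * mu') ^ t)
            * (\<integral>\<^sup>+ th. ennreal ((norm (th - theta_star pol P r rho phi beta))^2) \<partial>Theta)
         \<le> ennreal (exp (- gamma * (1 - beta) * mu' * real t))
            * (\<integral>\<^sup>+ th. ennreal ((norm (th - theta_star pol P r rho phi beta))^2) \<partial>Theta)"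
proof -
  define Z where "Z = theta_star pol P r rho phi beta"
  define mu where "mu = min_eigenvalue (Bmat rho phi)"
  define c where "c = 1 - gamma * (1 - beta) * mu'"
  define M where "M = (\<Pi>\<^sub>M i\<in>(UNIV::nat set). measure_pmf q)"
  have Phi_pos: "(1 + beta)^2 * Phimax^2 > 0"
  proof (rule ccontr)
    assume "\<not> (1 + beta)^2 * Phimax^2 > 0"
    hence "(1 + beta)^2 * Phimax^2 = 0" by (metis mult_nonneg_nonneg zero_le_power2 less_eq_real_def)
    hence "(1 - beta) / ((1 + beta)^2 * Phimax^2) = 0" by (simp only: division_ring_divide_zero)
    thus False using gamma by linarith
  qed
  have gk: "gamma * ((1+beta)^2 * Phimax^2) \<le> 1 - beta"
    using gamma(2) Phi_pos by (simp add: pos_le_divide_eq)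
  have mub: "\<forall>y. mu * (norm y)^2 \<le> qf rho phi y" "mu \<le> Phimax^2"
    using mu_bounds[OF rho_nonneg rho_sum phi_bound] unfolding mu_def by auto
  have mu_eq: "mu' = mu" by (simp add: mu'_def mu_def)
  interpret tdloc pol P rho q
    by (unfold_locales) (auto simp: pol_sum P_sum rho_nonneg rho_sum rho_stationary[symmetric] q_law)
  have os: "(\<integral>\<^sup>+x. ennreal ((norm ((mat 1 - gamma *\<^sub>R a_mat phi beta x) *v y))^2) \<partial>measure_pmf q)
          \<le> ennreal (c * (norm y)^2)" for y
    unfolding c_def mu_eq by (rule onestep[OF phi_bound beta gamma(1) gk]) (use mub in auto)
  have c0: "c \<ge> 0"
  proof -
    have "gamma * Phimax^2 \<le> gamma * ((1+beta)^2 * Phimax^2)"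
    proof (intro mult_left_mono)
      have "1 \<le> (1+beta)^2" using beta by (simp add: one_le_power)
      hence "1 * Phimax^2 \<le> (1+beta)^2 * Phimax^2" by (rule mult_right_mono) simp
      thus "Phimax^2 \<le> (1+beta)^2 * Phimax^2" by simp
    qed (use gamma in simp)
    hence gP: "gamma * Phimax^2 \<le> 1" using gk beta by linarith
    have "gamma * (1 - beta) * mu \<le> gamma * (1 - beta) * Phimax^2"
      using mub gamma beta by (intro mult_left_mono) auto
    also have "\<dots> \<le> 1"
    proof -
      have "(gamma*Phimax^2)*(1-beta) \<le> 1" by (rule mult_le_one[OF gP]) (use beta in auto)
      thus ?thesis by (simp add: mult_ac)
    qed
    finally show ?thesis by (simp add: c_def mu_eq)
  qed
  interpret PM: prob_space M unfolding M_def
    by (rule prob_space_PiM) (simp add: measure_pmf.prob_space_axioms)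
  have meas: "(\<lambda>(th, w). ennreal ((norm (Cprod phi beta gamma w t *v (th - Z)))^2)) \<in> borel_measurable (Theta \<Otimes>\<^sub>M M)"
  proof -
    have f1: "(\<lambda>p. fst p) \<in> borel_measurable (Theta \<Otimes>\<^sub>M M)"
      using measurable_fst[of Theta M] by (simp add: measurable_cong_sets[OF refl Theta_sets])
    have g1: "(\<lambda>p. Cprod phi beta gamma (snd p) t) \<in> borel_measurable (Theta \<Otimes>\<^sub>M M)"
      unfolding M_def by (rule measurable_compose[OF measurable_snd Cprod_meas]) simp
    have cc: "continuous_on UNIV (\<lambda>x :: (real^'d) \<times> (real^'d^'d). (norm (snd x *v (fst x - Z)))^2)"
      unfolding matrix_vector_mult_def by (intro continuous_intros)
    have "(\<lambda>p. (norm (Cprod phi beta gamma (snd p) t *v (fst p - Z)))^2) \<in> borel_measurable (Theta \<Otimes>\<^sub>M M)"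
      using borel_measurable_continuous_Pair[OF f1 g1 cc] by simp
    hence "(\<lambda>p. ennreal ((norm (Cprod phi beta gamma (snd p) t *v (fst p - Z)))^2)) \<in> borel_measurable (Theta \<Otimes>\<^sub>M M)"
      by measurable
    thus ?thesis by (simp add: case_prod_beta')
  qed
  have mth: "(\<lambda>th. ennreal ((norm (th - Z))^2)) \<in> borel_measurable Theta"
  proof -
    have "(\<lambda>th. ennreal ((norm (th - Z))^2)) \<in> borel_measurable (borel :: (real^'d) measure)"
      by measurable
    thus ?thesis by (simp add: measurable_cong_sets[OF Theta_sets refl])
  qed
  have A: "(\<integral>\<^sup>+ (th, w). ennreal ((norm (Cprod phi beta gamma w t *v (th - Z)))^2) \<partial>(Theta \<Otimes>\<^sub>M M))
      \<le> ennreal (c ^ t) * (\<integral>\<^sup>+ th. ennreal ((norm (th - Z))^2) \<partial>Theta)"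
  proof -
    have "(\<integral>\<^sup>+ (th, w). ennreal ((norm (Cprod phi beta gamma w t *v (th - Z)))^2) \<partial>(Theta \<Otimes>\<^sub>M M))
        = (\<integral>\<^sup>+ th. \<integral>\<^sup>+ w. ennreal ((norm (Cprod phi beta gamma w t *v (th - Z)))^2) \<partial>M \<partial>Theta)"
      using PM.nn_integral_fst[OF meas] by simp
    also have "\<dots> \<le> (\<integral>\<^sup>+ th. ennreal c ^ t * ennreal ((norm (th - Z))^2) \<partial>Theta)"
    proof (intro nn_integral_mono)
      fix th
      have "(\<integral>\<^sup>+ w. ennreal ((norm (Cprod phi beta gamma w t *v (th - Z)))^2) \<partial>M)
          \<le> ennreal (c^t * (norm (th - Z))^2)"
        unfolding M_def to_univ by (rule iter[OF os c0])
      also have "\<dots> = ennreal c ^ t * ennreal ((norm (th - Z))^2)"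
        using c0 by (simp add: ennreal_mult ennreal_power)
      finally show "(\<integral>\<^sup>+ w. ennreal ((norm (Cprod phi beta gamma w t *v (th - Z)))^2) \<partial>M)
          \<le> ennreal c ^ t * ennreal ((norm (th - Z))^2)" .
    qed
    also have "\<dots> = ennreal c ^ t * (\<integral>\<^sup>+ th. ennreal ((norm (th - Z))^2) \<partial>Theta)"
      by (rule nn_integral_cmult[OF mth])
    also have "\<dots> = ennreal (c ^ t) * (\<integral>\<^sup>+ th. ennreal ((norm (th - Z))^2) \<partial>Theta)"
      using c0 by (simp add: ennreal_power)
    finally show ?thesis .
  qed
  have B: "ennreal (c ^ t) * (\<integral>\<^sup>+ th. ennreal ((norm (th - Z))^2) \<partial>Theta)
      \<le> ennreal (exp (- gamma * (1 - beta) * mu' * real t)) * (\<integral>\<^sup>+ th. ennreal ((norm (th - Z))^2) \<partial>Theta)"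
  proof (intro mult_right_mono ennreal_leI)
    have "c \<le> exp (- (gamma * (1 - beta) * mu'))"
      using exp_ge_add_one_self[of "- (gamma * (1 - beta) * mu')"] by (simp add: c_def)
    hence "c ^ t \<le> exp (- (gamma * (1 - beta) * mu')) ^ t" using c0 by (rule power_mono)
    also have "\<dots> = exp (- gamma * (1 - beta) * mu' * real t)"
      by (simp add: exp_of_nat_mult[symmetric] mult_ac)
    finally show "c ^ t \<le> exp (- gamma * (1 - beta) * mu' * real t)" .
  qed simp
  show ?thesis using A B unfolding Z_def M_def c_def by simp
qed

end
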